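(* Let $M\subseteq\mathbb N$ be infinite, let $\mathcal B$ be a barrier on $M$, and let $f:\mathcal B\to c_0$ be an internal mapping which is bounded, i.e. there is $C$ such that $\|f(s)\|_\infty\le C$ for every $s\in\mathcal B$. Then for every $\varepsilon>0$ there exist an infinite set $N\subseteq M$ and a $U$-mapping $g:\mathcal B\upharpoonright N\to c_{00}$ such that $\|f(s)-g(s)\|_{\ell_1}\le\varepsilon$ for every $s\in\mathcal B\upharpoonright N$.
   Context: $\mathbb N=\{0,1,2,\dots\}$; $\mathrm{FIN}$ is the family of finite subsets of $\mathbb N$. For $X,Y\subseteq\mathbb N$: $X<Y$ means $\max X<\min Y$ (with $\emptyset<X$ and $X<\emptyset$ for all $X$); $X\sqsubseteq Y$ means $X\subseteq Y$ and $X<Y\setminus X$; $X/Y=\{m\in X: m>\max Y\}$. A family $\mathcal B\subseteq\mathrm{FIN}$ is a barrier on $M$ if every member is a subset of $M$, no member is a proper subset of another member, and every infinite $N\subseteq M$ has some $s\in\mathcal B$ with $s\sqsubseteq N$. For a family $\mathcal F$ and $N\subseteq\mathbb N$, $\mathcal F\upharpoonright N=\{s\in\mathcal F: s\subseteq N\}$. For $\xi\in c_0$, $\mathrm{supp}\,\xi=\{i:\xi(i)\ne0\}$; $c_{00}$ denotes finitely supported sequences. A map $f:\mathcal F\to c_0$ ($\mathcal F\subseteq\mathrm{FIN}$) is internal if $\mathrm{supp}\, f(s)\subseteq s$ for all $s\in\mathcal F$; it is uniform if for every $t\in\mathrm{FIN}$ all values $f(s)(\min(s/t))$, for $s\in\mathcal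 F$ with $t\sqsubseteq s$ and $s/t\neq\emptyset$, coincide; a $U$-mapping is an internal uniform mapping. *)

theory Defs
  imports "HOL-Analysis.Analysis"
begin

definition set_less :: "nat set \<Rightarrow> nat set \<Rightarrow> bool" where
  "set_less X Y \<longleftrightarrow> (\<forall>x\<in>X. \<forall>y\<in>Y. x < y)"

definition init_seg :: "nat set \<Rightarrow> nat set \<Rightarrow> bool" where
  "init_seg X Y \<longleftrightarrow> X \<subseteq> Y \<and> set_less X (Y - X)"

definition set_after :: "nat set \<Rightarrow> nat set \<Rightarrow> nat set" where
  "set_after X Y = {m \<in> X. \<forall>y\<in>Y. y < m}"

definition barrier :: "nat set set \<Rightarrow> nat set \<Rightarrow> bool" where
  "barrier B M \<longleftrightarrow>
     (\<forall>s\<in>B. finite s \<and> s \<subseteq> M) \<and>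
     (\<forall>s\<in>B. \<forall>t\<in>B. \<not> (s \<subset> t)) \<and>
     (\<forall>N. N \<subseteq> M \<and> infinite N \<longrightarrow> (\<exists>s\<in>B. init_seg s N))"

definition restr :: "nat set set \<Rightarrow> nat set \<Rightarrow> nat set set" where
  "restr F N = {s \<in> F. s \<subseteq> N}"

definition internal :: "nat set set \<Rightarrow> (nat set \<Rightarrow> nat \<Rightarrow> real) \<Rightarrow> bool" where
  "internal F f \<longleftrightarrow> (\<forall>s\<in>F. {i. f s i \<noteq> 0} \<subseteq> s)"

definition uniform :: "nat set set \<Rightarrow> (nat set \<Rightarrow> nat \<Rightarrow> real) \<Rightarrow> bool" where
  "uniform F f \<longleftrightarrow> (\<forall>t. finite t \<longrightarrow>
     (\<forall>s1\<in>F. \<forall>s2\<in>F. init_seg t s1 \<and> init_seg t s2 \<and>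
        set_after s1 t \<noteq> {} \<and> set_after s2 t \<noteq> {} \<longrightarrow>
        f s1 (Min (set_after s1 t)) = f s2 (Min (set_after s2 t))))"

definition U_mapping :: "nat set set \<Rightarrow> (nat set \<Rightarrow> nat \<Rightarrow> real) \<Rightarrow> bool" where
  "U_mapping F f \<longleftrightarrow> internal F f \<and> uniform F f"

definition l1_norm :: "(nat \<Rightarrow> real) \<Rightarrow> real" where
  "l1_norm x = (\<Sum>i. \<bar>x i\<bar>)"

end

theory Submission imports Defs begin

lemma set_after_infinite:
  assumes "finite u" "infinite Q" shows "infinite (set_after Q u)"
proof -
  have "Q - (\<Union>y\<in>u. {..y}) \<subseteq> set_after Q u" unfolding set_after_def by (auto simp: not_le)
  moreover have "infinite (Q - (\<Union>y\<in>u. {..y}))" using assms by (simp add: Diff_infinite_finite)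
  ultimately show ?thesis using infinite_super by blast
qed

lemma set_after_sub: "set_after Q u \<subseteq> Q" by (auto simp: set_after_def)
lemma set_after_mono: "Q \<subseteq> Q' \<Longrightarrow> set_after Q u \<subseteq> set_after Q' u" by (auto simp: set_after_def)

lemma init_seg_comparable: "init_seg u X \<Longrightarrow> init_seg w X \<Longrightarrow> u \<subseteq> w \<or> w \<subseteq> u"
proof (rule ccontr)
  assume u: "init_seg u X" and w: "init_seg w X" and "\<not> (u \<subseteq> w \<or> w \<subseteq> u)"
  then obtain x y where "x \<in> u" "x \<notin> w" "y \<in> w" "y \<notin> u" by auto
  moreover have "x \<in> X" "y \<in> X" using u w \<open>x \<in> u\<close> \<open>y \<in> w\<close> unfolding init_seg_def by auto
  ultimately have "x < y" "y < x" using u w unfolding init_seg_def set_less_def by auto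
  then show False by simp
qed

lemma init_seg_union: "X \<subseteq> set_after Q u \<Longrightarrow> init_seg u (u \<union> X)"
  unfolding init_seg_def set_less_def set_after_def by auto

lemma set_after_init: "init_seg t s \<Longrightarrow> set_after s t = s - t"
  unfolding init_seg_def set_less_def set_after_def by auto

lemma densify_fin:
  assumes her: "\<And>a A B. G a A \<Longrightarrow> B \<subseteq> A \<Longrightarrow> infinite B \<Longrightarrow> G a B"
    and dense: "\<And>a A. finite a \<Longrightarrow> infinite A \<Longrightarrow> set_less a A \<Longrightarrow> \<exists>B\<subseteq>A. infinite B \<and> G a B"
    and "finite T" and "\<forall>t\<in>T. finite t \<and> set_less t A" and "infinite A"
  shows "\<exists>B\<subseteq>A. infinite B \<and> (\<forall>t\<in>T. G t B)"
  using assms(3,4)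
proof (induction T rule: finite_induct)
  case empty then show ?case using assms(5) by blast
next
  case (insert t T)
  then obtain B1 where B1: "B1 \<subseteq> A" "infinite B1" "\<forall>t\<in>T. G t B1" by auto
  have "set_less t B1" using insert.prems B1(1) unfolding set_less_def by auto
  then obtain B2 where B2: "B2 \<subseteq> B1" "infinite B2" "G t B2"
    using dense[of t B1] insert.prems B1(2) by auto
  have "\<forall>t'\<in>T. G t' B2" using B1(3) her[OF _ B2(1,2)] by blast
  moreover have "B2 \<subseteq> A" using B1(1) B2(1) by blast
  ultimately show ?case using B2(2,3) by blast
qed

definition chs :: "(nat set \<Rightarrow> nat set \<Rightarrow> bool) \<Rightarrow> nat set \<Rightarrow> nat set \<Rightarrow> nat set" where
  "chs G A P = (SOME B. B \<subseteq> P \<and> infinite B \<and> (\<forall>t. t \<subseteq> A \<longrightarrow> G t B))"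

fun stp :: "(nat set \<Rightarrow> nat set \<Rightarrow> bool) \<Rightarrow> nat set \<Rightarrow> nat \<Rightarrow> nat set \<times> nat set" where
  "stp G P0 0 = ({}, P0)"
| "stp G P0 (Suc k) = (let A = fst (stp G P0 k); B = chs G A (snd (stp G P0 k));
      m = (LEAST x. x \<in> B) in (insert m A, {x\<in>B. m < x}))"

lemma diag:
  assumes her: "\<And>a A B. G a A \<Longrightarrow> B \<subseteq> A \<Longrightarrow> infinite B \<Longrightarrow> G a B"
    and dense: "\<And>a A. finite a \<Longrightarrow> infinite A \<Longrightarrow> set_less a A \<Longrightarrow> \<exists>B\<subseteq>A. infinite B \<and> G a B"
    and P0: "infinite P0"
  shows "\<exists>Q\<subseteq>P0. infinite Q \<and> (\<forall>a. finite a \<and> a \<subseteq> Q \<longrightarrow> G a (set_after Q a))"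
proof -
  define A where "A k = fst (stp G P0 k)" for k
  define P where "P k = snd (stp G P0 k)" for k
  define B where "B k = chs G (A k) (P k)" for k
  define m where "m k = (LEAST x. x \<in> B k)" for k
  have A0: "A 0 = {}" and P0': "P 0 = P0" by (simp_all add: A_def P_def)
  have AS: "A (Suc k) = insert (m k) (A k)" for k by (simp add: A_def m_def B_def P_def Let_def)
  have PS: "P (Suc k) = {x\<in>B k. m k < x}" for k by (simp add: A_def m_def B_def P_def Let_def)
  have chs: "chs G A' P' \<subseteq> P' \<and> infinite (chs G A' P') \<and> (\<forall>t. t \<subseteq> A' \<longrightarrow> G t (chs G A' P'))"
    if "finite A'" "infinite P'" "set_less A' P'" for A' P'
  proof -
    have "\<exists>B\<subseteq>P'. infinite B \<and> (\<forall>t\<in>Pow A'. G t B)"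
      apply (rule densify_fin[OF her dense])
      using that by (auto simp: set_less_def intro: finite_subset)
    then have "\<exists>B. B \<subseteq> P' \<and> infinite B \<and> (\<forall>t. t \<subseteq> A' \<longrightarrow> G t B)" by auto
    then show ?thesis unfolding chs_def by (rule someI_ex)
  qed
  have inv: "finite (A k) \<and> infinite (P k) \<and> P k \<subseteq> P0 \<and> A k \<subseteq> P0 \<and> set_less (A k) (P k)" for k
  proof (induction k)
    case 0
    show ?case using A0 P0' P0 by (simp add: set_less_def)
  next
    case (Suc k)
    then have c: "B k \<subseteq> P k" "infinite (B k)" "\<forall>t. t \<subseteq> A k \<longrightarrow> G t (B k)"
      using chs unfolding B_def by blast+
    obtain x0 where "x0 \<in> B k" using c(2) by (metis finite.emptyI ex_in_conv)
    then have mB: "m k \<in> B k" unfolding m_def by (rule LeastI)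
    have "{x\<in>B k. m k < x} = B k - {..m k}" by auto
    then have "infinite (P (Suc k))" using c(2) PS by (simp add: Diff_infinite_finite)
    moreover have "set_less (A (Suc k)) (P (Suc k))"
      using Suc c(1) unfolding AS PS set_less_def by auto
    ultimately show ?case using Suc c(1) mB unfolding AS PS by auto
  qed
  have Bk: "B k \<subseteq> P k" "infinite (B k)" "\<forall>t. t \<subseteq> A k \<longrightarrow> G t (B k)" for k
    using chs inv unfolding B_def by blast+
  have mB: "m k \<in> B k" for k
  proof -
    obtain x0 where "x0 \<in> B k" using Bk(2)[of k] by (metis finite.emptyI ex_in_conv)
    then show ?thesis unfolding m_def by (rule LeastI)
  qed
  have PSsub: "P (Suc k) \<subseteq> B k" for k unfolding PS by auto
  have Pdec: "P j \<subseteq> P k" if "k \<le> j" for j k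
    using that
  proof (induction j)
    case 0 then show ?case by simp
  next
    case (Suc j)
    show ?case
    proof (cases "k = Suc j")
      case True then show ?thesis by simp
    next
      case False then have "k \<le> j" using Suc.prems by simp
      then show ?thesis using Suc.IH PSsub[of j] Bk(1)[of j] by blast
    qed
  qed
  have Amono: "A k \<subseteq> A j" if "k \<le> j" for j k
    using that
  proof (induction j)
    case 0 then show ?case by simp
  next
    case (Suc j)
    show ?case
    proof (cases "k = Suc j")
      case True then show ?thesis by simp
    next
      case False then have "k \<le> j" using Suc.prems by simp
      then show ?thesis using Suc.IH AS[of j] by blast
    qed
  qed
  have mnot: "m k \<notin> A k" for k using inv[of k] mB[of k] Bk(1)[of k] unfolding set_less_def by blast
  have cardA: "card (A k) = k" for k
    by (induction k) (auto simp: A0 AS mnot inv)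
  have diffB: "A j - A k \<subseteq> B k" if "k \<le> j" for j k
    using that
  proof (induction j)
    case 0 then show ?case by simp
  next
    case (Suc j)
    show ?case
    proof (cases "k \<le> j")
      case True
      then have "m j \<in> B k"
      proof (cases "j = k")
        case True then show ?thesis using mB by simp
      next
        case False
        then have "P j \<subseteq> P (Suc k)" using Pdec True by simp
        then show ?thesis using mB[of j] Bk(1)[of j] PSsub[of k] by blast
      qed
      then show ?thesis using Suc True AS by auto
    next
      case False
      then have "k = Suc j" using Suc by simp
      then show ?thesis by simp
    qed
  qed
  define Q where "Q = (\<Union>k. A k)"
  have QP: "Q \<subseteq> P0" unfolding Q_def using inv by blast
  have Qinf: "infinite Q"
  proof
    assume "finite Q"
    then have "card (A k) \<le> card Q" for k by (rule card_mono) (auto simp: Q_def)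
    from this[of "Suc (card Q)"] show False using cardA by simp
  qed
  have "G a (set_after Q a)" if a: "finite a" "a \<subseteq> Q" for a
  proof -
    have "\<exists>k. a \<subseteq> A k" using a
    proof (induction a rule: finite_induct)
      case empty then show ?case by simp
    next
      case (insert x a)
      then obtain k where k: "a \<subseteq> A k" by auto
      obtain j where j: "x \<in> A j" using insert.prems unfolding Q_def by auto
      have "A j \<subseteq> A (max j k)" "A k \<subseteq> A (max j k)" by (rule Amono, simp)+
      then have "insert x a \<subseteq> A (max j k)" using k j by blast
      then show ?case by blast
    qed
    define k0 where "k0 = (LEAST k. a \<subseteq> A k)"
    have ak0: "a \<subseteq> A k0" unfolding k0_def using \<open>\<exists>k. a \<subseteq> A k\<close> by (rule LeastI_ex)
    have small: "\<forall>x\<in>A k0. \<exists>y\<in>a. x \<le> y"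
    proof (cases k0)
      case 0 then show ?thesis using A0 by simp
    next
      case (Suc j)
      then have "\<not> a \<subseteq> A j" using not_less_Least[of j "\<lambda>k. a \<subseteq> A k"] unfolding k0_def by simp
      then have "m j \<in> a" using ak0 Suc AS by auto
      moreover have "\<forall>x\<in>A j. x < m j" using inv[of j] mB[of j] Bk(1)[of j] unfolding set_less_def by blast
      ultimately show ?thesis using Suc AS by (auto intro: less_imp_le)
    qed
    have "set_after Q a \<subseteq> B k0"
    proof
      fix x assume x: "x \<in> set_after Q a"
      then obtain j where j: "x \<in> A j" unfolding set_after_def Q_def by auto
      have xa: "\<forall>y\<in>a. y < x" using x unfolding set_after_def by auto
      have "x \<notin> A k0"
      proof
        assume "x \<in> A k0"
        then obtain y where "y \<in> a" "x \<le> y" using small by blast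
        then show False using xa by force
      qed
      have "k0 \<le> j"
      proof (rule ccontr)
        assume "\<not> k0 \<le> j"
        then have "A j \<subseteq> A k0" using Amono by simp
        then show False using j \<open>x \<notin> A k0\<close> by blast
      qed
      then show "x \<in> B k0" using diffB j \<open>x \<notin> A k0\<close> by blast
    qed
    moreover have "infinite (set_after Q a)" using set_after_infinite a Qinf by blast
    ultimately show ?thesis using her Bk(3) ak0 by blast
  qed
  then show ?thesis using QP Qinf by blast
qed


definition acc :: "nat set set \<Rightarrow> nat set \<Rightarrow> nat set \<Rightarrow> bool" where
  "acc F a A \<longleftrightarrow> (\<forall>X. X \<subseteq> A \<and> infinite X \<longrightarrow> (\<exists>u\<in>F. init_seg u (a \<union> X)))"

definition rej :: "nat set set \<Rightarrow> nat set \<Rightarrow> nat set \<Rightarrow> bool" where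
  "rej F a A \<longleftrightarrow> (\<forall>B. B \<subseteq> A \<and> infinite B \<longrightarrow> \<not> acc F a B)"

lemma NW:
  assumes fin: "\<forall>u\<in>F. finite u" and P: "infinite P"
  shows "\<exists>Q\<subseteq>P. infinite Q \<and> ((\<forall>u\<in>F. \<not> u \<subseteq> Q) \<or>
           (\<forall>X. X \<subseteq> Q \<and> infinite X \<longrightarrow> (\<exists>u\<in>F. init_seg u X)))"
proof -
  define G1 where "G1 a A \<longleftrightarrow> acc F a A \<or> rej F a A" for a A
  have "\<exists>Q\<subseteq>P. infinite Q \<and> (\<forall>a. finite a \<and> a \<subseteq> Q \<longrightarrow> G1 a (set_after Q a))"
  proof (rule diag)
    show "G1 a B" if "G1 a A" "B \<subseteq> A" "infinite B" for a A B
      using that unfolding G1_def acc_def rej_def by blast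
    show "\<exists>B\<subseteq>A. infinite B \<and> G1 a B" if "infinite A" for a A
      using that unfolding G1_def rej_def by blast
  qed (rule P)
  then obtain Q1 where Q1: "Q1 \<subseteq> P" "infinite Q1" "\<And>a. finite a \<Longrightarrow> a \<subseteq> Q1 \<Longrightarrow> G1 a (set_after Q1 a)"
    by blast
  have sa0: "set_after Q1 {} = Q1" by (simp add: set_after_def)
  show ?thesis
  proof (cases "acc F {} Q1")
    case True
    then show ?thesis using Q1 unfolding acc_def by auto
  next
    case False
    then have rej0: "rej F {} Q1" using Q1(3)[of "{}"] sa0 unfolding G1_def by simp
    define G2 where "G2 a A \<longleftrightarrow> (a \<subseteq> Q1 \<and> finite a \<and> rej F a (set_after Q1 a) \<longrightarrow>
        (\<forall>n\<in>A. n \<in> Q1 \<longrightarrow> (\<forall>y\<in>a. y < n) \<longrightarrow> rej F (insert n a) (set_after Q1 (insert n a))))" for a A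
    have "\<exists>Q\<subseteq>Q1. infinite Q \<and> (\<forall>a. finite a \<and> a \<subseteq> Q \<longrightarrow> G2 a (set_after Q a))"
    proof (rule diag)
      show "G2 a B" if "G2 a A" "B \<subseteq> A" "infinite B" for a A B
        using that unfolding G2_def by blast
      show "\<exists>B\<subseteq>A. infinite B \<and> G2 a B" if "infinite A" for a A
      proof (cases "a \<subseteq> Q1 \<and> finite a \<and> rej F a (set_after Q1 a)")
        case False
        then show ?thesis using that unfolding G2_def by blast
      next
        case True
        define S where "S = {n\<in>Q1. (\<forall>y\<in>a. y < n) \<and> \<not> rej F (insert n a) (set_after Q1 (insert n a))}"
        have Sacc: "acc F (insert n a) (set_after Q1 (insert n a))" if "n \<in> S" for n
        proof -
          have "insert n a \<subseteq> Q1" "finite (insert n a)" using that True unfolding S_def by auto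
          then have "G1 (insert n a) (set_after Q1 (insert n a))" using Q1(3) by blast
          then show ?thesis using that unfolding S_def G1_def by blast
        qed
        have "finite S"
        proof (rule ccontr)
          assume Sinf: "infinite S"
          have Ssub: "S \<subseteq> set_after Q1 a" unfolding S_def set_after_def by auto
          have "acc F a S"
            unfolding acc_def
          proof (intro allI impI)
            fix X assume X: "X \<subseteq> S \<and> infinite X"
            then obtain x0 where "x0 \<in> X" by (metis finite.emptyI ex_in_conv)
            define n where "n = (LEAST x. x \<in> X)"
            have nX: "n \<in> X" unfolding n_def using \<open>x0 \<in> X\<close> by (rule LeastI)
            have nle: "n \<le> x" if "x \<in> X" for x unfolding n_def using that by (rule Least_le)
            have X'sub: "X - {n} \<subseteq> set_after Q1 (insert n a)"
            proof
              fix x assume x: "x \<in> X - {n}"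
              then have "x \<in> S" "n < x" using X nle[of x] by auto
              then show "x \<in> set_after Q1 (insert n a)" unfolding S_def set_after_def by auto
            qed
            have "infinite (X - {n})" using X by simp
            then obtain u where "u \<in> F" "init_seg u (insert n a \<union> (X - {n}))"
              using Sacc[of n] nX X X'sub unfolding acc_def by blast
            moreover have "insert n a \<union> (X - {n}) = a \<union> X" using nX by auto
            ultimately show "\<exists>u\<in>F. init_seg u (a \<union> X)" by auto
          qed
          then show False using True Ssub Sinf unfolding rej_def by blast
        qed
        have "G2 a (A - S)" unfolding G2_def S_def by blast
        moreover have "infinite (A - S)" using that \<open>finite S\<close> by (simp add: Diff_infinite_finite)
        ultimately show ?thesis by blast
      qed
    qed (rule Q1(2))
    then obtain Q2 where Q2: "Q2 \<subseteq> Q1" "infinite Q2" "\<And>a. finite a \<Longrightarrow> a \<subseteq> Q2 \<Longrightarrow> G2 a (set_after Q2 a)"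
      by blast
    have rejall: "a \<subseteq> Q2 \<longrightarrow> rej F a (set_after Q1 a)" if "finite a" for a
      using that
    proof (induction a rule: finite_linorder_max_induct)
      case empty then show ?case using rej0 sa0 by simp
    next
      case (insert b a)
      show ?case
      proof
        assume ba: "insert b a \<subseteq> Q2"
        then have "rej F a (set_after Q1 a)" using insert by simp
        moreover have "G2 a (set_after Q2 a)" using Q2(3)[of a] insert ba by simp
        moreover have "b \<in> set_after Q2 a" using ba insert unfolding set_after_def by auto
        ultimately show "rej F (insert b a) (set_after Q1 (insert b a))"
          using ba Q2(1) insert unfolding G2_def by blast
      qed
    qed
    have "\<forall>u\<in>F. \<not> u \<subseteq> Q2"
    proof (intro ballI notI)
      fix u assume u: "u \<in> F" "u \<subseteq> Q2"
      then have r: "rej F u (set_after Q1 u)" using rejall fin by blast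
      have "set_after Q2 u \<subseteq> set_after Q1 u" using Q2(1) by (rule set_after_mono)
      moreover have "infinite (set_after Q2 u)" using set_after_infinite fin u Q2(2) by blast
      moreover have "acc F u (set_after Q2 u)" unfolding acc_def
        using u(1) init_seg_union by blast
      ultimately show False using r unfolding rej_def by blast
    qed
    then show ?thesis using Q2 Q1 by blast
  qed
qed


lemma color:
  fixes E :: "nat set set"
  assumes "\<forall>u\<in>E. \<forall>v\<in>E. \<not> u \<subset> v" and "\<forall>u\<in>E. finite u"
    and "\<forall>u\<in>E. c u < (m::nat)" and "infinite P"
  shows "\<exists>Q\<subseteq>P. infinite Q \<and> (\<forall>u\<in>E. \<forall>v\<in>E. u \<subseteq> Q \<and> v \<subseteq> Q \<longrightarrow> c u = c v)"
  using assms
proof (induction m arbitrary: E P)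
  case 0
  then have "E = {}" by auto
  then show ?case using 0 by blast
next
  case (Suc m)
  define F where "F = {u\<in>E. c u = m}"
  have "\<forall>u\<in>F. finite u" using Suc.prems unfolding F_def by auto
  then obtain Q where Q: "Q \<subseteq> P" "infinite Q"
    and alt: "(\<forall>u\<in>F. \<not> u \<subseteq> Q) \<or> (\<forall>X. X \<subseteq> Q \<and> infinite X \<longrightarrow> (\<exists>u\<in>F. init_seg u X))"
    using NW[of F P] Suc.prems(4) by blast
  show ?case
  proof (cases "\<forall>u\<in>F. \<not> u \<subseteq> Q")
    case True
    define E' where "E' = {u\<in>E. c u \<noteq> m}"
    have "\<forall>u\<in>E'. c u < m" using Suc.prems(3) unfolding E'_def by fastforce
    moreover have "\<forall>u\<in>E'. \<forall>v\<in>E'. \<not> u \<subset> v" "\<forall>u\<in>E'. finite u"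
      using Suc.prems(1,2) unfolding E'_def by auto
    ultimately obtain Q' where Q': "Q' \<subseteq> Q" "infinite Q'"
      "\<forall>u\<in>E'. \<forall>v\<in>E'. u \<subseteq> Q' \<and> v \<subseteq> Q' \<longrightarrow> c u = c v"
      using Suc.IH[of E' Q] Q(2) by blast
    have "\<forall>u\<in>E. u \<subseteq> Q' \<longrightarrow> u \<in> E'"
      using True Q'(1) unfolding E'_def F_def by blast
    then have "\<forall>u\<in>E. \<forall>v\<in>E. u \<subseteq> Q' \<and> v \<subseteq> Q' \<longrightarrow> c u = c v" using Q'(3) by blast
    moreover have "Q' \<subseteq> P" using Q'(1) Q(1) by blast
    ultimately show ?thesis using Q'(2) by blast
  next
    case False
    then have all: "\<forall>X. X \<subseteq> Q \<and> infinite X \<longrightarrow> (\<exists>u\<in>F. init_seg u X)" using alt by blast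
    have "c u = m" if u: "u \<in> E" "u \<subseteq> Q" for u
    proof -
      define X where "X = u \<union> set_after Q u"
      have "X \<subseteq> Q" unfolding X_def using u set_after_sub by blast
      moreover have "infinite X" unfolding X_def using set_after_infinite Suc.prems(2) u Q(2) by simp
      ultimately obtain w where w: "w \<in> F" "init_seg w X" using all by blast
      have "init_seg u X" unfolding X_def by (rule init_seg_union[where Q=Q]) simp
      then have "u \<subseteq> w \<or> w \<subseteq> u" using w(2) init_seg_comparable by blast
      moreover have "w \<in> E" using w(1) unfolding F_def by simp
      ultimately have "w = u" using Suc.prems(1) u(1) by blast
      then show ?thesis using w(1) unfolding F_def by simp
    qed
    then show ?thesis using Q by auto
  qed
qed

lemma homog:
  fixes E :: "nat set set"
  assumes "\<forall>u\<in>E. \<forall>v\<in>E. \<not> u \<subset> v" and "\<forall>u\<in>E. finite u"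
    and bound: "\<forall>u\<in>E. \<bar>h u\<bar> \<le> C" and dpos: "(\<delta>::real) > 0" and "infinite P"
  shows "\<exists>Q\<subseteq>P. infinite Q \<and> (\<exists>a. \<forall>u\<in>E. u \<subseteq> Q \<longrightarrow> \<bar>h u - a\<bar> \<le> \<delta>)"
proof -
  define c where "c u = nat \<lfloor>(h u + C) / \<delta>\<rfloor>" for u
  define m where "m = Suc (nat \<lfloor>2 * C / \<delta>\<rfloor>)"
  have hb: "0 \<le> h u + C" "h u + C \<le> 2 * C" if "u \<in> E" for u
  proof -
    have "\<bar>h u\<bar> \<le> C" using bound that by blast
    then show "0 \<le> h u + C" "h u + C \<le> 2 * C" by (simp_all add: abs_le_iff)
  qed
  have "c u < m" if "u \<in> E" for u
  proof -
    have "(h u + C) / \<delta> \<le> 2 * C / \<delta>"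
      by (rule divide_right_mono) (use hb[OF that] dpos in simp_all)
    then have "\<lfloor>(h u + C) / \<delta>\<rfloor> \<le> \<lfloor>2 * C / \<delta>\<rfloor>" by (rule floor_mono)
    then show ?thesis unfolding c_def m_def by linarith
  qed
  then obtain Q where Q: "Q \<subseteq> P" "infinite Q" "\<forall>u\<in>E. \<forall>v\<in>E. u \<subseteq> Q \<and> v \<subseteq> Q \<longrightarrow> c u = c v"
    using color[of E c m P] assms by blast
  show ?thesis
  proof (cases "\<exists>u0\<in>E. u0 \<subseteq> Q")
    case False then show ?thesis using Q by blast
  next
    case True
    then obtain u0 where u0: "u0 \<in> E" "u0 \<subseteq> Q" by blast
    have "\<bar>h u - h u0\<bar> \<le> \<delta>" if u: "u \<in> E" "u \<subseteq> Q" for u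
    proof -
      define p where "p = (h u + C) / \<delta>"
      define q where "q = (h u0 + C) / \<delta>"
      have "p \<ge> 0" unfolding p_def using hb(1)[OF u(1)] dpos by simp
      have "q \<ge> 0" unfolding q_def using hb(1)[OF u0(1)] dpos by simp
      have fp: "\<lfloor>p\<rfloor> \<ge> 0" "\<lfloor>q\<rfloor> \<ge> 0" using \<open>p \<ge> 0\<close> \<open>q \<ge> 0\<close> by simp_all
      have "c u = c u0" using Q(3) u u0 by blast
      then have "nat \<lfloor>p\<rfloor> = nat \<lfloor>q\<rfloor>" unfolding c_def p_def q_def .
      then have "int (nat \<lfloor>p\<rfloor>) = int (nat \<lfloor>q\<rfloor>)" by (rule arg_cong)
      then have fl: "\<lfloor>p\<rfloor> = \<lfloor>q\<rfloor>" using nat_0_le[OF fp(1)] nat_0_le[OF fp(2)] by linarith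
      have "p - 1 < real_of_int \<lfloor>p\<rfloor>" "q - 1 < real_of_int \<lfloor>q\<rfloor>"
        "real_of_int \<lfloor>p\<rfloor> \<le> p" "real_of_int \<lfloor>q\<rfloor> \<le> q" by simp_all
      then have "\<bar>p - q\<bar> < 1" using fl by linarith
      moreover have "p - q = (h u - h u0) / \<delta>" unfolding p_def q_def using dpos by (simp add: field_simps)
      ultimately have "\<bar>h u - h u0\<bar> / \<delta> < 1" using dpos by simp
      then show ?thesis using dpos by (simp add: divide_less_eq)
    qed
    then show ?thesis using Q by blast
  qed
qed

lemma Hlem:
  assumes anti: "\<forall>s\<in>B. \<forall>s'\<in>B. \<not> s \<subset> s'" and fin: "\<forall>s\<in>B. finite s"
    and bound: "\<forall>s\<in>B. \<forall>i. \<bar>f s i\<bar> \<le> C" and dpos: "(\<delta>::real) > 0" and A: "infinite A"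
  shows "\<exists>Q\<subseteq>A. infinite Q \<and> (\<exists>a. \<forall>s\<in>B. init_seg t s \<and> set_after s t \<noteq> {} \<and> s - t \<subseteq> Q
           \<longrightarrow> \<bar>f s (Min (set_after s t)) - a\<bar> \<le> \<delta>)"
proof -
  define D where "D = {s\<in>B. init_seg t s \<and> set_after s t \<noteq> {}}"
  define E where "E = (\<lambda>s. s - t) ` D"
  define h where "h u = f (t \<union> u) (Min u)" for u
  have key: "t \<union> (s - t) = s" "set_after s t = s - t" if "s \<in> D" for s
  proof -
    have i: "init_seg t s" using that unfolding D_def by simp
    then have "t \<subseteq> s" unfolding init_seg_def by simp
    then show "t \<union> (s - t) = s" by blast
    show "set_after s t = s - t" using i by (rule set_after_init)
  qed
  have antiE: "\<forall>u\<in>E. \<forall>v\<in>E. \<not> u \<subset> v"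
  proof (intro ballI notI)
    fix u v assume "u \<in> E" "v \<in> E" "u \<subset> v"
    then obtain s1 s2 where s: "s1 \<in> D" "s2 \<in> D" "u = s1 - t" "v = s2 - t" unfolding E_def by blast
    then have ss: "s1 - t \<subset> s2 - t" using \<open>u \<subset> v\<close> by simp
    then have "s1 \<noteq> s2" by auto
    moreover have "s1 \<subseteq> s2" using key(1)[OF s(1)] key(1)[OF s(2)] ss by blast
    ultimately have "s1 \<subset> s2" by blast
    then show False using anti s(1,2) unfolding D_def by blast
  qed
  have finE: "\<forall>u\<in>E. finite u" using fin unfolding E_def D_def by auto
  have bE: "\<forall>u\<in>E. \<bar>h u\<bar> \<le> C"
  proof
    fix u assume "u \<in> E"
    then obtain s where sD: "s \<in> D" and us: "u = s - t" unfolding E_def by blast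
    have "s \<in> B" using sD unfolding D_def by simp
    moreover have "h u = f s (Min (s - t))" using key(1)[OF sD] unfolding h_def us by simp
    ultimately show "\<bar>h u\<bar> \<le> C" using bound by simp
  qed
  obtain Q a where Q: "Q \<subseteq> A" "infinite Q" "\<forall>u\<in>E. u \<subseteq> Q \<longrightarrow> \<bar>h u - a\<bar> \<le> \<delta>"
    using homog[OF antiE finE bE dpos A] by blast
  have "\<bar>f s (Min (set_after s t)) - a\<bar> \<le> \<delta>"
    if s: "s \<in> B" "init_seg t s" "set_after s t \<noteq> {}" "s - t \<subseteq> Q" for s
  proof -
    have sD: "s \<in> D" using s unfolding D_def by simp
    then have "s - t \<in> E" unfolding E_def by blast
    then have "\<bar>h (s - t) - a\<bar> \<le> \<delta>" using Q(3) s(4) by blast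
    moreover have "h (s - t) = f s (Min (set_after s t))" unfolding h_def using key[OF sD] by simp
    ultimately show ?thesis by simp
  qed
  then show ?thesis using Q by blast
qed

lemma geom_half: "(\<Sum>k<K. (1/2::real)^Suc k) = 1 - (1/2)^K"
  by (induction K) simp_all

lemma sum_rank:
  fixes s :: "nat set" assumes fs: "finite s"
  shows "(\<Sum>i\<in>s. (1/2::real)^Suc (card {x\<in>s. x<i})) \<le> 1"
proof -
  define r where "r i = card {x\<in>s. x<i}" for i
  have lt: "r i < r j" if "i\<in>s" "j\<in>s" "i<j" for i j
  proof -
    have "{x\<in>s. x<i} \<subset> {x\<in>s. x<j}" using that by auto
    moreover have "finite {x\<in>s. x<j}" using fs by simp
    ultimately show ?thesis unfolding r_def by (rule psubset_card_mono[rotated])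
  qed
  have inj: "inj_on r s"
  proof (rule linorder_inj_onI')
    fix i j assume "i \<in> s" "j \<in> s" "i < j"
    then show "r i \<noteq> r j" using lt[of i j] by simp
  qed
  have sub: "r ` s \<subseteq> {..<card s}"
  proof
    fix k assume "k \<in> r ` s"
    then obtain i where i: "i \<in> s" "k = r i" by blast
    have "{x\<in>s. x<i} \<subset> s" using i(1) by auto
    then have "card {x\<in>s. x<i} < card s" using fs by (rule psubset_card_mono[rotated])
    then show "k \<in> {..<card s}" using i unfolding r_def by simp
  qed
  have "(\<Sum>i\<in>s. (1/2::real)^Suc (r i)) = (\<Sum>k\<in>r`s. (1/2::real)^Suc k)"
    by (simp add: sum.reindex[OF inj])
  also have "\<dots> \<le> (\<Sum>k<card s. (1/2::real)^Suc k)"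
    by (rule sum_mono2) (use sub in auto)
  also have "\<dots> = 1 - (1/2)^card s" by (rule geom_half)
  also have "\<dots> \<le> 1" by simp
  finally show ?thesis unfolding r_def .
qed

theorem mainTheorem1:
  fixes M :: "nat set" and B :: "nat set set" and f :: "nat set \<Rightarrow> nat \<Rightarrow> real"
    and \<epsilon> :: real
  assumes "infinite M"
    and "barrier B M"
    and "\<forall>s\<in>B. f s \<longlonglongrightarrow> 0"
    and "internal B f"
    and "\<exists>C. \<forall>s\<in>B. \<forall>i. \<bar>f s i\<bar> \<le> C"
    and "\<epsilon> > 0"
  shows "\<exists>N g. infinite N \<and> N \<subseteq> M \<and> U_mapping (restr B N) g \<and>
           (\<forall>s\<in>restr B N. finite {i. g s i \<noteq> 0}) \<and>
           (\<forall>s\<in>restr B N. l1_norm (\<lambda>i. f s i - g s i) \<le> \<epsilon>)"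
proof -
  have anti: "\<forall>s\<in>B. \<forall>s'\<in>B. \<not> s \<subset> s'" and fin: "\<forall>s\<in>B. finite s"
    using assms(2) unfolding barrier_def by auto
  obtain C where C: "\<forall>s\<in>B. \<forall>i. \<bar>f s i\<bar> \<le> C" using assms(5) by blast
  define \<delta> where "\<delta> t = \<epsilon> * (1/2)^Suc (card t)" for t :: "nat set"
  have dpos: "\<delta> t > 0" for t using assms(6) unfolding \<delta>_def by simp
  define G where "G t A \<longleftrightarrow> (\<exists>a. \<forall>s\<in>B. init_seg t s \<and> set_after s t \<noteq> {} \<and> s - t \<subseteq> A
      \<longrightarrow> \<bar>f s (Min (set_after s t)) - a\<bar> \<le> \<delta> t)" for t A
  have "\<exists>N\<subseteq>M. infinite N \<and> (\<forall>t. finite t \<and> t \<subseteq> N \<longrightarrow> G t (set_after N t))"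
  proof (rule diag)
    show "G a B'" if "G a A" "B' \<subseteq> A" "infinite B'" for a A B'
      using that unfolding G_def by blast
    show "\<exists>B'\<subseteq>A. infinite B' \<and> G a B'" if "infinite A" for a A
      using Hlem[OF anti fin C dpos[of a] that, where t=a] unfolding G_def by blast
  qed (rule assms(1))
  then obtain N where N: "N \<subseteq> M" "infinite N" "\<And>t. finite t \<Longrightarrow> t \<subseteq> N \<Longrightarrow> G t (set_after N t)"
    by blast
  define \<phi> where "\<phi> t = (SOME a. \<forall>s\<in>B. init_seg t s \<and> set_after s t \<noteq> {} \<and> s - t \<subseteq> set_after N t
      \<longrightarrow> \<bar>f s (Min (set_after s t)) - a\<bar> \<le> \<delta> t)" for t
  have \<phi>: "\<forall>s\<in>B. init_seg t s \<and> set_after s t \<noteq> {} \<and> s - t \<subseteq> set_after N t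
      \<longrightarrow> \<bar>f s (Min (set_after s t)) - \<phi> t\<bar> \<le> \<delta> t" if "finite t" "t \<subseteq> N" for t
    using N(3)[OF that] unfolding G_def \<phi>_def by (rule someI_ex)
  define g where "g s i = (if i \<in> s then \<phi> {x\<in>s. x < i} else 0)" for s i
  have minlem: "Min (set_after s t) \<in> s \<and> {x\<in>s. x < Min (set_after s t)} = t"
    if "finite s" "init_seg t s" "set_after s t \<noteq> {}" for s t
  proof -
    let ?S = "set_after s t"
    have fS: "finite ?S" using that(1) set_after_sub finite_subset by blast
    have nS: "Min ?S \<in> ?S" using Min_in fS that(3) by blast
    then have ns: "Min ?S \<in> s" using set_after_sub by blast
    have ts: "t \<subseteq> s" "set_less t (s - t)" using that(2) unfolding init_seg_def by auto
    have "{x\<in>s. x < Min ?S} = t"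
    proof
      show "t \<subseteq> {x\<in>s. x < Min ?S}" using ts(1) nS unfolding set_after_def by auto
      show "{x\<in>s. x < Min ?S} \<subseteq> t"
      proof
        fix x assume x: "x \<in> {x\<in>s. x < Min ?S}"
        show "x \<in> t"
        proof (rule ccontr)
          assume "x \<notin> t"
          then have "x \<in> ?S" using x ts(2) unfolding set_after_def set_less_def by auto
          then have "Min ?S \<le> x" using fS by simp
          then show False using x by simp
        qed
      qed
    qed
    then show ?thesis using ns by blast
  qed
  have pt: "\<bar>f s n - g s n\<bar> \<le> \<delta> {x\<in>s. x<n}" if s: "s \<in> restr B N" "n \<in> s" for s n
  proof -
    define t where "t = {x\<in>s. x<n}"
    have sB: "s \<in> B" "s \<subseteq> N" using s(1) unfolding restr_def by auto
    have fs: "finite s" using fin sB by blast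
    have ft: "finite t" "t \<subseteq> N" using fs sB unfolding t_def by auto
    have it: "init_seg t s" unfolding init_seg_def set_less_def t_def by auto
    have nS: "n \<in> set_after s t" using s(2) unfolding set_after_def t_def by auto
    have mn: "Min (set_after s t) = n"
    proof (rule Min_eqI)
      show "finite (set_after s t)" using fs set_after_sub finite_subset by blast
      show "n \<in> set_after s t" by (rule nS)
      fix y assume "y \<in> set_after s t"
      then have "y \<in> s" "\<forall>z\<in>t. z < y" unfolding set_after_def by auto
      then show "n \<le> y" unfolding t_def using not_le by fastforce
    qed
    have st: "s - t \<subseteq> set_after N t" using sB(2) unfolding set_after_def t_def by auto
    have ne: "set_after s t \<noteq> {}" using nS by blast
    have "\<bar>f s (Min (set_after s t)) - \<phi> t\<bar> \<le> \<delta> t" using \<phi>[OF ft] sB(1) it ne st by blast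
    moreover have "g s n = \<phi> t" unfolding g_def t_def using s(2) by simp
    ultimately show ?thesis using mn unfolding t_def by simp
  qed
  have U: "U_mapping (restr B N) g"
    unfolding U_mapping_def
  proof
    show "internal (restr B N) g" unfolding internal_def g_def by auto
    show "uniform (restr B N) g" unfolding uniform_def
    proof (intro allI impI ballI)
      fix t s1 s2 assume "finite t" "s1 \<in> restr B N" "s2 \<in> restr B N"
        and h: "init_seg t s1 \<and> init_seg t s2 \<and> set_after s1 t \<noteq> {} \<and> set_after s2 t \<noteq> {}"
      then have f1: "finite s1" "finite s2" using fin unfolding restr_def by auto
      have m1: "Min (set_after s1 t) \<in> s1 \<and> {x\<in>s1. x < Min (set_after s1 t)} = t"
        using minlem f1(1) h by blast
      have m2: "Min (set_after s2 t) \<in> s2 \<and> {x\<in>s2. x < Min (set_after s2 t)} = t"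
        using minlem f1(2) h by blast
      show "g s1 (Min (set_after s1 t)) = g s2 (Min (set_after s2 t))"
        unfolding g_def using m1 m2 by simp
    qed
  qed
  have FS: "\<forall>s\<in>restr B N. finite {i. g s i \<noteq> 0}"
  proof
    fix s assume "s \<in> restr B N"
    then have "finite s" using fin unfolding restr_def by auto
    moreover have "{i. g s i \<noteq> 0} \<subseteq> s" unfolding g_def by auto
    ultimately show "finite {i. g s i \<noteq> 0}" by (rule finite_subset[rotated])
  qed
  have L: "l1_norm (\<lambda>i. f s i - g s i) \<le> \<epsilon>" if s: "s \<in> restr B N" for s
  proof -
    have sB: "s \<in> B" using s unfolding restr_def by auto
    have fs: "finite s" using fin sB by blast
    have zero: "\<bar>f s i - g s i\<bar> = 0" if "i \<notin> s" for i
    proof -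
      have "f s i = 0" using assms(4) sB that unfolding internal_def by blast
      moreover have "g s i = 0" unfolding g_def using that by simp
      ultimately show ?thesis by simp
    qed
    have "l1_norm (\<lambda>i. f s i - g s i) = (\<Sum>i\<in>s. \<bar>f s i - g s i\<bar>)"
      unfolding l1_norm_def by (rule suminf_finite[OF fs zero])
    also have "\<dots> \<le> (\<Sum>i\<in>s. \<delta> {x\<in>s. x<i})"
      by (rule sum_mono) (rule pt[OF s])
    also have "\<dots> = \<epsilon> * (\<Sum>i\<in>s. (1/2::real)^Suc (card {x\<in>s. x<i}))"
      unfolding \<delta>_def by (simp add: sum_distrib_left)
    also have "\<dots> \<le> \<epsilon> * 1"
      by (rule mult_left_mono[OF sum_rank[OF fs]]) (use assms(6) in simp)
    finally show ?thesis by simp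
  qed
  show ?thesis using N(1,2) U FS L by blast
qed

end
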